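(* Let $b>1$, $L>\pi$, and $\bar a\in\left(0,1-\frac{\pi^2}{L^2}\right)$. Then there exists a pair $(\phi,\psi)$ solving $$-\phi''=\phi(1-\phi-\bar a\psi),\quad -\psi''=\psi(1-b\phi-\psi)\ \text{ in }(0,L),\qquad \phi(0)=\phi(L)=0,\ \psi(0)=\psi(L)=1,$$ with $0<\phi(x)<1$ and $0<\psi(x)<1$ for all $x\in(0,L)$. *)

theory Defs
  imports "HOL-Analysis.Analysis"
begin

end

theory Submission
  imports Defs
begin


definition Rep :: "real \<Rightarrow> real \<Rightarrow> real \<Rightarrow> real \<Rightarrow> (real \<Rightarrow> real) \<Rightarrow> real \<Rightarrow> real" where
"Rep k L al be F x = (al * sinh (k*(L-x)) + be * sinh (k*x)) / sinh (k*L)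
  + (sinh (k*(L-x)) * integral {0..x} (\<lambda>y. sinh (k*y) * F y)
     + sinh (k*x) * (integral {0..L} (\<lambda>y. sinh (k*(L-y)) * F y) - integral {0..x} (\<lambda>y. sinh (k*(L-y)) * F y)))
    / (k * sinh (k*L))"

definition Rep1 :: "real \<Rightarrow> real \<Rightarrow> real \<Rightarrow> real \<Rightarrow> (real \<Rightarrow> real) \<Rightarrow> real \<Rightarrow> real" where
"Rep1 k L al be F x = k * (be * cosh (k*x) - al * cosh (k*(L-x))) / sinh (k*L)
  + (cosh (k*x) * (integral {0..L} (\<lambda>y. sinh (k*(L-y)) * F y) - integral {0..x} (\<lambda>y. sinh (k*(L-y)) * F y))
     - cosh (k*(L-x)) * integral {0..x} (\<lambda>y. sinh (k*y) * F y)) / sinh (k*L)"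

lemma int_deriv:
  assumes "continuous_on {0..L} h" "x \<in> {0<..<L}"
  shows "((\<lambda>x. integral {0..x} h) has_real_derivative h x) (at x)"
proof -
  have "((\<lambda>x. integral {0..x} h) has_real_derivative h x) (at x within {0..L})"
    using assms by (intro integral_has_real_derivative) auto
  then show ?thesis using assms(2) by (simp add: at_within_Icc_at)
qed

lemma Rep_deriv:
  assumes k: "k > 0" and L: "L > 0" and F: "continuous_on {0..L} F" and x: "x \<in> {0<..<L}"
  shows "(Rep k L al be F has_real_derivative Rep1 k L al be F x) (at x)"
    and "(Rep1 k L al be F has_real_derivative (k^2 * Rep k L al be F x - F x)) (at x)"
proof -
  define A where "A = (\<lambda>x. integral {0..x} (\<lambda>y. sinh (k*y) * F y))"
  define B where "B = (\<lambda>x. integral {0..x} (\<lambda>y. sinh (k*(L-y)) * F y))"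
  define C where "C = integral {0..L} (\<lambda>y. sinh (k*(L-y)) * F y)"
  have c1: "continuous_on {0..L} (\<lambda>y. sinh (k*y) * F y)"
    by (intro continuous_intros F)
  have c2: "continuous_on {0..L} (\<lambda>y. sinh (k*(L-y)) * F y)"
    by (intro continuous_intros F)
  have dA: "(A has_real_derivative sinh (k*x) * F x) (at x)"
    unfolding A_def by (rule int_deriv[OF c1 x])
  have dB: "(B has_real_derivative sinh (k*(L-x)) * F x) (at x)"
    unfolding B_def by (rule int_deriv[OF c2 x])
  have S: "sinh (k*L) > 0" using k L by simp
  define s where "s = sinh (k*L)"
  have R: "Rep k L al be F = (\<lambda>x. (al/s) * sinh (k*(L-x)) + (be/s) * sinh (k*x)
      + (1/(k * s)) * (sinh (k*(L-x)) * A x) + (1/(k * s)) * (sinh (k*x) * (C - B x)))"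
    by (rule ext) (simp add: Rep_def A_def B_def C_def s_def add_divide_distrib diff_divide_distrib)
  have R1: "Rep1 k L al be F = (\<lambda>x. (k*be/s) * cosh (k*x) - (k*al/s) * cosh (k*(L-x))
      + (1/s) * (cosh (k*x) * (C - B x)) - (1/s) * (cosh (k*(L-x)) * A x))"
    by (rule ext) (simp add: Rep1_def A_def B_def C_def s_def add_divide_distrib diff_divide_distrib right_diff_distrib)
  have S': "s > 0" using S s_def by simp
  show "(Rep k L al be F has_real_derivative Rep1 k L al be F x) (at x)"
    unfolding R R1
    apply (rule derivative_eq_intros refl dA dB)+
    using S' k by (auto simp: field_simps)
  have e: "cosh (k*(L-x)) * sinh (k*x) + cosh (k*x) * sinh (k*(L-x)) = s"
    using sinh_add[of "k*x" "k*(L-x)"] by (simp add: algebra_simps s_def)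
  show "(Rep1 k L al be F has_real_derivative (k^2 * Rep k L al be F x - F x)) (at x)"
    unfolding R R1
    apply (rule derivative_eq_intros refl dA dB)+
    using S' k e by (auto simp: field_simps power2_eq_square)
qed

lemma Rep_0: "k > 0 \<Longrightarrow> L > 0 \<Longrightarrow> Rep k L al be F 0 = al"
  by (simp add: Rep_def)

lemma Rep_L: "k > 0 \<Longrightarrow> L > 0 \<Longrightarrow> Rep k L al be F L = be"
  by (simp add: Rep_def)

lemma Rep_cont:
  assumes k: "k > 0" and L: "L > 0"
    and i1: "(\<lambda>y. sinh (k*y) * F y) integrable_on {0..L}"
    and i2: "(\<lambda>y. sinh (k*(L-y)) * F y) integrable_on {0..L}"
  shows "continuous_on {0..L} (Rep k L al be F)"
proof -
  have c1: "continuous_on {0..L} (\<lambda>x. integral {0..x} (\<lambda>y. sinh (k*y) * F y))"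
    by (rule indefinite_integral_continuous_1[OF i1])
  have c2: "continuous_on {0..L} (\<lambda>x. integral {0..x} (\<lambda>y. sinh (k*(L-y)) * F y))"
    by (rule indefinite_integral_continuous_1[OF i2])
  have S: "sinh (k*L) \<noteq> 0" "k * sinh (k*L) \<noteq> 0" using k L by auto
  show ?thesis
    unfolding Rep_def
    by (intro continuous_on_add continuous_on_divide continuous_on_mult continuous_on_diff
       continuous_on_const c1 c2 continuous_intros) (use S in auto)
qed

lemma SD:
  fixes u u' :: "real \<Rightarrow> real"
  assumes "a < x0" "x0 < b"
    and du: "\<And>x. x \<in> {a<..<b} \<Longrightarrow> (u has_real_derivative u' x) (at x)"
    and d2: "(u' has_real_derivative l) (at x0)"
    and mx: "\<And>x. x \<in> {a<..<b} \<Longrightarrow> u x \<le> u x0"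
  shows "l \<le> 0"
proof (rule ccontr)
  assume "\<not> l \<le> 0" then have l: "l > 0" by simp
  have "u' x0 = 0"
  proof (rule DERIV_local_max[OF du[of x0]])
    show "x0 \<in> {a<..<b}" using assms by auto
    show "0 < min (x0 - a) (b - x0)" using assms by auto
    show "\<forall>y. \<bar>x0 - y\<bar> < min (x0 - a) (b - x0) \<longrightarrow> u y \<le> u x0"
      by (intro allI impI mx) auto
  qed
  obtain d where d: "d > 0" "\<And>h. h > 0 \<Longrightarrow> h < d \<Longrightarrow> u' x0 < u' (x0 + h)"
    using DERIV_pos_inc_right[OF d2 l] by blast
  define h where "h = min (d/2) ((b - x0)/2)"
  have h1: "h \<le> (b-x0)/2" "h \<le> d/2" "h > 0" unfolding h_def using d(1) assms(1,2) by (auto simp: min_def)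
  have h: "h > 0" "h < d" "x0 + h < b" using h1 d(1) assms(1,2) by (simp_all add: field_simps)
  obtain z where z: "x0 < z" "z < x0 + h" "u (x0+h) - u x0 = (x0 + h - x0) * u' z"
    using MVT2[of x0 "x0+h" u u'] h assms du by fastforce
  have "u' z > 0" using d(2)[of "z - x0"] z h \<open>u' x0 = 0\<close> by auto
  then have "h * u' z > 0" using h(1) by simp
  then have "u (x0+h) > u x0" using z(3) by simp
  moreover have "u (x0+h) \<le> u x0" using mx[of "x0+h"] h assms by auto
  ultimately show False by simp
qed

lemma Uniq:
  fixes d :: "real \<Rightarrow> real"
  assumes k: "k > 0" and L: "L > 0" and c: "continuous_on {0..L} d"
    and d1: "\<And>x. x \<in> {0<..<L} \<Longrightarrow> (d has_real_derivative d' x) (at x)"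
    and d2: "\<And>x. x \<in> {0<..<L} \<Longrightarrow> (d' has_real_derivative k^2 * d x) (at x)"
    and b0: "d 0 = 0" and bL: "d L = 0"
    and x: "x \<in> {0..L}"
  shows "d x \<le> 0"
proof -
  obtain x0 where x0: "x0 \<in> {0..L}" "\<And>y. y \<in> {0..L} \<Longrightarrow> d y \<le> d x0"
    using continuous_attains_sup[OF compact_Icc _ c] L by fastforce
  show ?thesis
  proof (rule ccontr)
    assume "\<not> d x \<le> 0"
    then have pos: "d x0 > 0" using x0(2)[OF x] by simp
    then have "x0 \<noteq> 0" "x0 \<noteq> L" using b0 bL by auto
    then have "0 < x0" "x0 < L" using x0(1) by auto
    have "k^2 * d x0 \<le> 0"
      by (rule SD[OF \<open>0 < x0\<close> \<open>x0 < L\<close> d1 d2]) (use \<open>0 < x0\<close> \<open>x0 < L\<close> x0 in auto)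
    moreover have "k^2 * d x0 > 0" using pos k by simp
    ultimately show False by simp
  qed
qed

lemma Uniq_eq:
  fixes d :: "real \<Rightarrow> real"
  assumes k: "k > 0" and L: "L > 0" and c: "continuous_on {0..L} d"
    and d1: "\<And>x. x \<in> {0<..<L} \<Longrightarrow> (d has_real_derivative d' x) (at x)"
    and d2: "\<And>x. x \<in> {0<..<L} \<Longrightarrow> (d' has_real_derivative k^2 * d x) (at x)"
    and b0: "d 0 = 0" and bL: "d L = 0"
    and x: "x \<in> {0..L}"
  shows "d x = 0"
proof -
  have "d x \<le> 0" by (rule Uniq[OF k L c d1 d2 b0 bL x])
  moreover have "(\<lambda>x. - d x) x \<le> 0"
    by (rule Uniq[OF k L _ _ _ _ _ x, where d'="\<lambda>x. - d' x"])
      (auto intro!: derivative_eq_intros continuous_intros c d1 d2 simp: b0 bL)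
  ultimately show ?thesis by simp
qed

lemma Rep_cont2:
  assumes "k > 0" "L > 0" "continuous_on {0..L} F"
  shows "continuous_on {0..L} (Rep k L al be F)"
  by (rule Rep_cont[OF assms(1,2)]) (auto intro!: integrable_continuous_interval continuous_intros assms)

lemma Rep_sol:
  assumes k: "k > 0" and L: "L > 0" and F: "continuous_on {0..L} F"
    and w: "continuous_on {0..L} w"
    and w1: "\<And>x. x \<in> {0<..<L} \<Longrightarrow> (w has_real_derivative w' x) (at x)"
    and w2: "\<And>x. x \<in> {0<..<L} \<Longrightarrow> (w' has_real_derivative k^2 * w x - F x) (at x)"
    and x: "x \<in> {0..L}"
  shows "Rep k L (w 0) (w L) F x = w x"
proof -
  have "(\<lambda>x. Rep k L (w 0) (w L) F x - w x) x = 0"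
  proof (rule Uniq_eq[OF k L _ _ _ _ _ x, where d'="\<lambda>x. Rep1 k L (w 0) (w L) F x - w' x"])
    show "continuous_on {0..L} (\<lambda>x. Rep k L (w 0) (w L) F x - w x)"
      by (intro continuous_intros Rep_cont2 F w k L)
    fix y assume y: "y \<in> {0<..<L}"
    show "((\<lambda>x. Rep k L (w 0) (w L) F x - w x) has_real_derivative Rep1 k L (w 0) (w L) F y - w' y) (at y)"
      by (intro derivative_intros Rep_deriv(1)[OF k L F y] w1 y)
    show "((\<lambda>x. Rep1 k L (w 0) (w L) F x - w' x) has_real_derivative
        k^2 * (\<lambda>x. Rep k L (w 0) (w L) F x - w x) y) (at y)"
      using DERIV_diff[OF Rep_deriv(2)[OF k L F y] w2[OF y]] by (simp add: algebra_simps)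
  qed (use k L in \<open>auto simp: Rep_0 Rep_L\<close>)
  then show ?thesis by simp
qed

lemma Rep_mono:
  assumes k: "k > 0" and L: "L > 0" and F1: "continuous_on {0..L} F1" and F2: "continuous_on {0..L} F2"
    and le: "\<And>y. y \<in> {0..L} \<Longrightarrow> F1 y \<le> F2 y" and "al1 \<le> al2" "be1 \<le> be2"
    and x: "x \<in> {0..L}"
  shows "Rep k L al1 be1 F1 x \<le> Rep k L al2 be2 F2 x"
proof -
  have S: "sinh (k*L) > 0" using k L by simp
  have i: "(\<lambda>y. sinh (k*(L-y)) * F y) integrable_on {0..L}" if "continuous_on {0..L} F" for F
    by (auto intro!: integrable_continuous_interval continuous_intros that)
  have split: "integral {0..L} (\<lambda>y. sinh (k*(L-y)) * F y) - integral {0..x} (\<lambda>y. sinh (k*(L-y)) * F y)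
      = integral {x..L} (\<lambda>y. sinh (k*(L-y)) * F y)" if "continuous_on {0..L} F" for F
    using Henstock_Kurzweil_Integration.integral_combine[where a=0 and c=x and b=L, OF _ _ i[OF that]] x by auto
  have a: "integral {0..x} (\<lambda>y. sinh (k*y) * F1 y) \<le> integral {0..x} (\<lambda>y. sinh (k*y) * F2 y)"
  proof (rule integral_le)
    show "(\<lambda>y. sinh (k*y) * F1 y) integrable_on {0..x}" "(\<lambda>y. sinh (k*y) * F2 y) integrable_on {0..x}"
      using x by (auto intro!: integrable_continuous_interval continuous_intros
        continuous_on_subset[OF F1] continuous_on_subset[OF F2])
    fix y assume "y \<in> {0..x}" then show "sinh (k*y) * F1 y \<le> sinh (k*y) * F2 y"
      using le[of y] x k by (intro mult_left_mono) auto
  qed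
  have b: "integral {x..L} (\<lambda>y. sinh (k*(L-y)) * F1 y) \<le> integral {x..L} (\<lambda>y. sinh (k*(L-y)) * F2 y)"
  proof (rule integral_le)
    show "(\<lambda>y. sinh (k*(L-y)) * F1 y) integrable_on {x..L}" "(\<lambda>y. sinh (k*(L-y)) * F2 y) integrable_on {x..L}"
      using x by (auto intro!: integrable_continuous_interval continuous_intros
        continuous_on_subset[OF F1] continuous_on_subset[OF F2])
    fix y assume "y \<in> {x..L}" then show "sinh (k*(L-y)) * F1 y \<le> sinh (k*(L-y)) * F2 y"
      using le[of y] x k by (intro mult_left_mono) auto
  qed
  have s1: "sinh (k*(L-x)) \<ge> 0" "sinh (k*x) \<ge> 0" using x k by auto
  have P: "(al1 * sinh (k*(L-x)) + be1 * sinh (k*x)) \<le> (al2 * sinh (k*(L-x)) + be2 * sinh (k*x))"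
    using s1 assms by (intro add_mono mult_right_mono) auto
  have Q: "sinh (k*(L-x)) * integral {0..x} (\<lambda>y. sinh (k*y) * F1 y) + sinh (k*x) * integral {x..L} (\<lambda>y. sinh (k*(L-y)) * F1 y)
     \<le> sinh (k*(L-x)) * integral {0..x} (\<lambda>y. sinh (k*y) * F2 y) + sinh (k*x) * integral {x..L} (\<lambda>y. sinh (k*(L-y)) * F2 y)"
    using s1 a b by (intro add_mono mult_left_mono) auto
  show ?thesis
    unfolding Rep_def split[OF F1] split[OF F2]
    by (rule add_mono[OF divide_right_mono[OF P] divide_right_mono[OF Q]]) (use S k in auto)
qed

lemma fmono:
  fixes u1 u2 v1 v2 a K :: real
  assumes "0 \<le> u1" "u1 \<le> u2" "u2 \<le> 1" "0 \<le> v2" "v2 \<le> v1" "v1 \<le> 1" "0 \<le> a" "a \<le> 1" "K \<ge> 2"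
  shows "u1 * (1 - u1 - a * v1) + K*u1 \<le> u2 * (1 - u2 - a * v2) + K*u2"
proof -
  have e: "u2 * (1 - u2 - a * v2) + K*u2 - (u1 * (1 - u1 - a * v1) + K*u1)
     = (u2-u1)*(1+K-(u1+u2)-a * v2) + a*u1*(v1-v2)" by (simp add: algebra_simps)
  have "a * v2 \<le> 1" using assms by (auto intro!: mult_le_one)
  then have "(u2-u1)*(1+K-(u1+u2)-a * v2) \<ge> 0" using assms by (intro mult_nonneg_nonneg) auto
  moreover have "a*u1*(v1-v2) \<ge> 0" using assms by simp
  ultimately show ?thesis using e by linarith
qed
lemma gmono:
  fixes u1 u2 v1 v2 b K :: real
  assumes "0 \<le> u1" "u1 \<le> u2" "u2 \<le> 1" "0 \<le> v2" "v2 \<le> v1" "v1 \<le> 1" "0 \<le> b" "K \<ge> b + 2"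
  shows "v2 * (1 - b*u2 - v2) + K * v2 \<le> v1 * (1 - b*u1 - v1) + K * v1"
proof -
  have e: "v1 * (1 - b*u1 - v1) + K * v1 - (v2 * (1 - b*u2 - v2) + K * v2)
     = (v1-v2)*(1+K-(v1+v2)-b*u1) + b * v2*(u2-u1)" by (simp add: algebra_simps)
  have "b*u1 \<le> b" using assms by (auto intro!: mult_left_le)
  then have "(v1-v2)*(1+K-(v1+v2)-b*u1) \<ge> 0" using assms by (intro mult_nonneg_nonneg) auto
  moreover have "b * v2*(u2-u1) \<ge> 0" using assms by simp
  ultimately show ?thesis using e by linarith
qed

lemma Rep_lim:
  assumes k: "k > 0" and L: "L > 0"
    and Fc: "\<And>n. continuous_on {0..L} (Fn n)"
    and Fb: "\<And>n y. y \<in> {0..L} \<Longrightarrow> \<bar>Fn n y\<bar> \<le> M"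
    and Fl: "\<And>y. y \<in> {0..L} \<Longrightarrow> (\<lambda>n. Fn n y) \<longlonglongrightarrow> F y"
  shows "(\<lambda>y. sinh (k*y) * F y) integrable_on {0..L}"
    and "(\<lambda>y. sinh (k*(L-y)) * F y) integrable_on {0..L}"
    and "\<And>x. x \<in> {0..L} \<Longrightarrow> (\<lambda>n. Rep k L al be (Fn n) x) \<longlonglongrightarrow> Rep k L al be F x"
proof -
  have DC: "(\<lambda>y. sinh (k*(q y)) * F y) integrable_on {0..x} \<and>
     (\<lambda>n. integral {0..x} (\<lambda>y. sinh (k*(q y)) * Fn n y)) \<longlonglongrightarrow> integral {0..x} (\<lambda>y. sinh (k*(q y)) * F y)"
    if x: "x \<in> {0..L}" and q: "continuous_on UNIV q" and qb: "\<And>y. y \<in> {0..L} \<Longrightarrow> 0 \<le> q y \<and> q y \<le> L" for x q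
  proof -
    have sub: "{0..x} \<subseteq> {0..L}" using x by auto
    have i: "(\<lambda>y. sinh (k*(q y)) * Fn n y) integrable_on {0..x}" for n
    proof -
      have "continuous_on {0..x} q" using continuous_on_subset[OF q] by blast
      moreover have "continuous_on {0..x} (Fn n)" using continuous_on_subset[OF Fc sub] .
      ultimately show ?thesis by (intro integrable_continuous_interval continuous_intros)
    qed
    have h: "(\<lambda>y. sinh (k*L) * M) integrable_on {0..x}" by (intro integrable_continuous_interval continuous_on_const)
    have le: "norm (sinh (k*(q y)) * Fn n y) \<le> sinh (k*L) * M" if y: "y \<in> {0..x}" for n y
    proof -
      have "0 \<le> q y" "q y \<le> L" using qb[of y] y sub by auto
      then have "0 \<le> sinh (k*(q y))" "sinh (k*(q y)) \<le> sinh (k*L)" using k by (simp_all add: mult_left_mono)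
      moreover have "\<bar>Fn n y\<bar> \<le> M" using Fb[of y] y sub by auto
      ultimately show ?thesis unfolding abs_mult norm_mult real_norm_def by (intro mult_mono) auto
    qed
    have cv: "(\<lambda>n. sinh (k*(q y)) * Fn n y) \<longlonglongrightarrow> sinh (k*(q y)) * F y" if "y \<in> {0..x}" for y
      using Fl[of y] that sub by (intro tendsto_intros) auto
    show ?thesis using dominated_convergence[OF i h le cv] by auto
  qed
  have q1: "continuous_on UNIV (\<lambda>y::real. y)" "continuous_on UNIV (\<lambda>y::real. L - y)"
    by (auto intro!: continuous_intros)
  have D1: "(\<lambda>y. sinh (k*y) * F y) integrable_on {0..x} \<and>
     (\<lambda>n. integral {0..x} (\<lambda>y. sinh (k*y) * Fn n y)) \<longlonglongrightarrow> integral {0..x} (\<lambda>y. sinh (k*y) * F y)"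
    if "x \<in> {0..L}" for x
    by (rule DC[OF that q1(1)]) auto
  have D2: "(\<lambda>y. sinh (k*(L-y)) * F y) integrable_on {0..x} \<and>
     (\<lambda>n. integral {0..x} (\<lambda>y. sinh (k*(L-y)) * Fn n y)) \<longlonglongrightarrow> integral {0..x} (\<lambda>y. sinh (k*(L-y)) * F y)"
    if "x \<in> {0..L}" for x
    by (rule DC[OF that q1(2)]) auto
  show "(\<lambda>y. sinh (k*y) * F y) integrable_on {0..L}" using D1[of L] L by auto
  show "(\<lambda>y. sinh (k*(L-y)) * F y) integrable_on {0..L}" using D2[of L] L by auto
  fix x assume x: "x \<in> {0..L}"
  show "(\<lambda>n. Rep k L al be (Fn n) x) \<longlonglongrightarrow> Rep k L al be F x"
  proof -
    have a: "(\<lambda>n. integral {0..x} (\<lambda>y. sinh (k*y) * Fn n y)) \<longlonglongrightarrow> integral {0..x} (\<lambda>y. sinh (k*y) * F y)"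
      using D1[OF x] by blast
    have b: "(\<lambda>n. integral {0..x} (\<lambda>y. sinh (k*(L-y)) * Fn n y)) \<longlonglongrightarrow> integral {0..x} (\<lambda>y. sinh (k*(L-y)) * F y)"
      using D2[OF x] by blast
    have c: "(\<lambda>n. integral {0..L} (\<lambda>y. sinh (k*(L-y)) * Fn n y)) \<longlonglongrightarrow> integral {0..L} (\<lambda>y. sinh (k*(L-y)) * F y)"
      using D2[of L] L by auto
    show ?thesis
      unfolding Rep_def
      by (rule tendsto_add[OF tendsto_const tendsto_divide[OF tendsto_add[OF tendsto_mult_left[OF a]
          tendsto_mult_left[OF tendsto_diff[OF c b]]] tendsto_const]]) (use k L in simp)
  qed
qed




definition fF :: "real \<Rightarrow> real \<Rightarrow> real \<Rightarrow> real \<Rightarrow> real" where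
  "fF a K u v = u * (1 - u - a * v) + K * u"
definition gF :: "real \<Rightarrow> real \<Rightarrow> real \<Rightarrow> real \<Rightarrow> real" where
  "gF b K u v = v * (1 - b * u - v) + K * v"

lemma fF_cont: "continuous_on S u \<Longrightarrow> continuous_on S v \<Longrightarrow> continuous_on S (\<lambda>y. fF a K (u y) (v y))"
  unfolding fF_def by (intro continuous_intros)
lemma gF_cont: "continuous_on S u \<Longrightarrow> continuous_on S v \<Longrightarrow> continuous_on S (\<lambda>y. gF a K (u y) (v y))"
  unfolding gF_def by (intro continuous_intros)
lemma fF_tendsto: "X \<longlonglongrightarrow> u \<Longrightarrow> Y \<longlonglongrightarrow> v \<Longrightarrow> (\<lambda>n. fF a K (X n) (Y n)) \<longlonglongrightarrow> fF a K u v"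
  unfolding fF_def by (intro tendsto_intros)
lemma gF_tendsto: "X \<longlonglongrightarrow> u \<Longrightarrow> Y \<longlonglongrightarrow> v \<Longrightarrow> (\<lambda>n. gF a K (X n) (Y n)) \<longlonglongrightarrow> gF a K u v"
  unfolding gF_def by (intro tendsto_intros)

lemma fF_mono:
  assumes "0 \<le> u1" "u1 \<le> u2" "u2 \<le> 1" "0 \<le> v2" "v2 \<le> v1" "v1 \<le> 1" "0 \<le> a" "a \<le> 1" "K \<ge> 2"
  shows "fF a K u1 v1 \<le> fF a K u2 v2"
  unfolding fF_def by (rule fmono[OF assms])

lemma gF_mono:
  assumes "0 \<le> u1" "u1 \<le> u2" "u2 \<le> 1" "0 \<le> v2" "v2 \<le> v1" "v1 \<le> 1" "0 \<le> b" "K \<ge> b + 2"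
  shows "gF b K u2 v2 \<le> gF b K u1 v1"
  unfolding gF_def by (rule gmono[OF assms])

lemma fF_bnd:
  assumes "0 \<le> u" "u \<le> 1" "0 \<le> v" "v \<le> 1" "0 \<le> a" "a \<le> 1" "K \<ge> 2"
  shows "0 \<le> fF a K u v" "fF a K u v \<le> K"
proof -
  have "fF a K 0 1 \<le> fF a K u v" using assms by (intro fF_mono) auto
  then show "0 \<le> fF a K u v" by (simp add: fF_def)
  have "fF a K u v \<le> fF a K 1 0" using assms by (intro fF_mono) auto
  then show "fF a K u v \<le> K" by (simp add: fF_def)
qed

lemma gF_bnd:
  assumes "0 \<le> u" "u \<le> 1" "0 \<le> v" "v \<le> 1" "0 \<le> b" "K \<ge> b + 2"
  shows "0 \<le> gF b K u v" "gF b K u v \<le> K"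
proof -
  have "gF b K 1 0 \<le> gF b K u v" using assms by (intro gF_mono) auto
  then show "0 \<le> gF b K u v" by (simp add: gF_def)
  have "gF b K u v \<le> gF b K 0 1" using assms by (intro gF_mono) auto
  then show "gF b K u v \<le> K" by (simp add: gF_def)
qed

lemma Rep_one:
  assumes k: "k > 0" and L: "L > 0" and x: "x \<in> {0..L}"
  shows "Rep k L 1 1 (\<lambda>_. k^2) x = 1"
  using Rep_sol[OF k L _ _ _ _ x, of "\<lambda>_. k^2" "\<lambda>_. 1" "\<lambda>_. 0"]
  by (auto intro!: derivative_eq_intros)

lemma Rep_zero:
  assumes k: "k > 0" and L: "L > 0" and x: "x \<in> {0..L}"
  shows "Rep k L 0 0 (\<lambda>_. 0) x = 0"
  using Rep_sol[OF k L _ _ _ _ x, of "\<lambda>_. 0" "\<lambda>_. 0" "\<lambda>_. 0"]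
  by (auto intro!: derivative_eq_intros)

lemma Rep_pos:
  assumes k: "k > 0" and L: "L > 0" and x: "x \<in> {0<..<L}"
  shows "Rep k L 1 1 (\<lambda>_. 0) x > 0"
proof -
  have "sinh (k*(L-x)) > 0" "sinh (k*x) > 0" "sinh (k*L) > 0" using k L x by auto
  then have "(1 * sinh (k*(L-x)) + 1 * sinh (k*x)) / sinh (k*L) > 0" by (intro divide_pos_pos add_pos_pos) auto
  then show ?thesis by (simp add: Rep_def)
qed

lemma Rep_sin:
  assumes k: "k > 0" and L: "L > 0" and x: "x \<in> {0..L}"
  shows "Rep k L 0 0 (\<lambda>y. (k^2 + (pi/L)^2) * (e * sin (pi * y / L))) x = e * sin (pi * x / L)"
proof -
  have "Rep k L ((\<lambda>y. e * sin (pi * y / L)) 0) ((\<lambda>y. e * sin (pi * y / L)) L)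
      (\<lambda>y. (k^2 + (pi/L)^2) * (e * sin (pi * y / L))) x = (\<lambda>y. e * sin (pi * y / L)) x"
  proof (rule Rep_sol[OF k L _ _ _ _ x, where w'="\<lambda>y. e * (cos (pi * y / L) * (pi / L))"])
    fix y :: real
    show "((\<lambda>y. e * sin (pi * y / L)) has_real_derivative e * (cos (pi * y / L) * (pi / L))) (at y)"
      using L by (auto intro!: derivative_eq_intros)
    show "((\<lambda>y. e * (cos (pi * y / L) * (pi / L))) has_real_derivative
        k^2 * (e * sin (pi * y / L)) - (k^2 + (pi/L)^2) * (e * sin (pi * y / L))) (at y)"
      using L by (auto intro!: derivative_eq_intros simp: power2_eq_square field_simps)
  qed (use L in \<open>auto intro!: continuous_intros\<close>)
  then show ?thesis using L by simp
qed

theorem proposition4: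
  fixes b L abar :: real
  assumes "b > 1" and "L > pi" and "abar > 0" and "abar < 1 - pi^2 / L^2"
  shows "\<exists>\<phi> \<phi>' \<phi>'' \<psi> \<psi>' \<psi>'' :: real \<Rightarrow> real.
    continuous_on {0..L} \<phi> \<and> continuous_on {0..L} \<psi> \<and>
    (\<forall>x\<in>{0<..<L}. (\<phi> has_real_derivative \<phi>' x) (at x) \<and>
                      (\<phi>' has_real_derivative \<phi>'' x) (at x) \<and>
                      (\<psi> has_real_derivative \<psi>' x) (at x) \<and>
                      (\<psi>' has_real_derivative \<psi>'' x) (at x) \<and>
                      - \<phi>'' x = \<phi> x * (1 - \<phi> x - abar * \<psi> x) \<and>
                      - \<psi>'' x = \<psi> x * (1 - b * \<phi> x - \<psi> x) \<and>
                      0 < \<phi> x \<and> \<phi> x < 1 \<and> 0 < \<psi> x \<and> \<psi> x < 1) \<and>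
    \<phi> 0 = 0 \<and> \<phi> L = 0 \<and> \<psi> 0 = 1 \<and> \<psi> L = 1"
proof -
  note b1 = assms(1) and Lpi = assms(2) and a0 = assms(3) and a1 = assms(4)
  define k where "k = b + 3"
  define K where "K = k^2"
  define c where "c = (pi/L)^2"
  define e where "e = (1 - abar - c) / 2"
  have L: "L > 0" using Lpi pi_gt_zero by linarith
  have k: "k > 0" using b1 by (simp add: k_def)
  have "k * 1 \<le> k * k" using b1 by (intro mult_left_mono) (auto simp: k_def)
  then have Kk: "K \<ge> k" by (simp add: K_def power2_eq_square)
  have K2: "K \<ge> 2" "K \<ge> b + 2" using Kk b1 by (auto simp: k_def)
  have c0: "c > 0" using L by (simp add: c_def)
  have cc: "c = pi^2 / L^2" by (simp add: c_def power_divide)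
  have e0: "e > 0" using a1 cc by (simp add: e_def)
  have e1: "e \<le> 1" using a0 c0 by (simp add: e_def)
  have ab: "0 \<le> abar" "abar \<le> 1" using a0 a1 c0 cc by auto
  have b0: "0 \<le> b" using b1 by simp
  define phi0 where "phi0 = (\<lambda>x. e * sin (pi * x / L))"
  have phi0b: "0 \<le> phi0 x \<and> phi0 x \<le> e" if "x \<in> {0..L}" for x
  proof -
    have "0 \<le> pi * x / L" "pi * x / L \<le> pi" using that L by (auto simp: field_simps)
    then have "0 \<le> sin (pi * x / L)" by (rule sin_ge_zero)
    moreover have "sin (pi * x / L) \<le> 1" by simp
    ultimately show ?thesis using e0 unfolding phi0_def by (auto intro: mult_left_le)
  qed
  have phi0p: "0 < phi0 x" if "x \<in> {0<..<L}" for x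
  proof -
    have "0 < pi * x / L" "pi * x / L < pi" using that L by (auto simp: field_simps)
    then have "0 < sin (pi * x / L)" by (rule sin_gt_zero)
    then show ?thesis using e0 unfolding phi0_def by simp
  qed
  have phi0c: "continuous_on {0..L} phi0" unfolding phi0_def using L by (intro continuous_intros) auto
  define step where "step = (\<lambda>p::(real\<Rightarrow>real)\<times>(real\<Rightarrow>real).
      (Rep k L 0 0 (\<lambda>y. fF abar K (fst p y) (snd p y)), Rep k L 1 1 (\<lambda>y. gF b K (fst p y) (snd p y))))"
  define P where "P = (\<lambda>n. (step ^^ n) (phi0, \<lambda>_. 1))"
  define ph where "ph = (\<lambda>n. fst (P n))"
  define ps where "ps = (\<lambda>n. snd (P n))"
  have ph0: "ph 0 = phi0" and ps0: "ps 0 = (\<lambda>_. 1)" by (simp_all add: ph_def ps_def P_def)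
  have phS: "ph (Suc n) = Rep k L 0 0 (\<lambda>y. fF abar K (ph n y) (ps n y))" for n
    by (simp add: ph_def ps_def P_def step_def)
  have psS: "ps (Suc n) = Rep k L 1 1 (\<lambda>y. gF b K (ph n y) (ps n y))" for n
    by (simp add: ph_def ps_def P_def step_def)
  have cont: "continuous_on {0..L} (ph n) \<and> continuous_on {0..L} (ps n)" for n
  proof (induction n)
    case 0 then show ?case using phi0c by (simp add: ph0 ps0)
  next
    case (Suc n)
    then show ?case unfolding phS psS
      by (intro conjI Rep_cont2 k L fF_cont gF_cont) auto
  qed
  have Rone: "Rep k L 1 1 (\<lambda>_. K) x = 1" if "x \<in> {0..L}" for x
    using Rep_one[OF k L that] by (simp add: K_def)
  have box_step: "Rep k L 0 0 (\<lambda>y. fF abar K (u1 y) (v1 y)) x \<le> Rep k L 0 0 (\<lambda>y. fF abar K (u2 y) (v2 y)) x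
      \<and> Rep k L 1 1 (\<lambda>y. gF b K (u2 y) (v2 y)) x \<le> Rep k L 1 1 (\<lambda>y. gF b K (u1 y) (v1 y)) x"
    if c: "continuous_on {0..L} u1" "continuous_on {0..L} v1" "continuous_on {0..L} u2" "continuous_on {0..L} v2"
      and bx: "\<And>y. y \<in> {0..L} \<Longrightarrow> 0 \<le> u1 y \<and> u1 y \<le> u2 y \<and> u2 y \<le> 1 \<and> 0 \<le> v2 y \<and> v2 y \<le> v1 y \<and> v1 y \<le> 1"
      and x: "x \<in> {0..L}" for u1 v1 u2 v2 x
  proof
    show "Rep k L 0 0 (\<lambda>y. fF abar K (u1 y) (v1 y)) x \<le> Rep k L 0 0 (\<lambda>y. fF abar K (u2 y) (v2 y)) x"
      by (rule Rep_mono[OF k L fF_cont[OF c(1,2)] fF_cont[OF c(3,4)] _ _ _ x])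
        (use bx ab K2 in \<open>auto intro!: fF_mono\<close>)
    show "Rep k L 1 1 (\<lambda>y. gF b K (u2 y) (v2 y)) x \<le> Rep k L 1 1 (\<lambda>y. gF b K (u1 y) (v1 y)) x"
      by (rule Rep_mono[OF k L gF_cont[OF c(3,4)] gF_cont[OF c(1,2)] _ _ _ x])
        (use bx b0 K2 in \<open>auto intro!: gF_mono\<close>)
  qed
  have box_bnd: "0 \<le> Rep k L 0 0 (\<lambda>y. fF abar K (u y) (v y)) x \<and> Rep k L 0 0 (\<lambda>y. fF abar K (u y) (v y)) x \<le> 1
      \<and> Rep k L 1 1 (\<lambda>_. 0) x \<le> Rep k L 1 1 (\<lambda>y. gF b K (u y) (v y)) x
      \<and> 0 \<le> Rep k L 1 1 (\<lambda>y. gF b K (u y) (v y)) x \<and> Rep k L 1 1 (\<lambda>y. gF b K (u y) (v y)) x \<le> 1"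
    if c: "continuous_on {0..L} u" "continuous_on {0..L} v"
      and bx: "\<And>y. y \<in> {0..L} \<Longrightarrow> 0 \<le> u y \<and> u y \<le> 1 \<and> 0 \<le> v y \<and> v y \<le> 1"
      and x: "x \<in> {0..L}" for u v x
  proof -
    have f1: "Rep k L 0 0 (\<lambda>_. 0) x \<le> Rep k L 0 0 (\<lambda>y. fF abar K (u y) (v y)) x"
      by (rule Rep_mono[OF k L continuous_on_const fF_cont[OF c] _ _ _ x])
        (use bx ab K2 in \<open>auto intro!: fF_bnd\<close>)
    have f2: "Rep k L 0 0 (\<lambda>y. fF abar K (u y) (v y)) x \<le> Rep k L 1 1 (\<lambda>_. K) x"
      by (rule Rep_mono[OF k L fF_cont[OF c] continuous_on_const _ _ _ x])
        (use bx ab K2 in \<open>auto intro!: fF_bnd\<close>)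
    have g1: "Rep k L 1 1 (\<lambda>_. 0) x \<le> Rep k L 1 1 (\<lambda>y. gF b K (u y) (v y)) x"
      by (rule Rep_mono[OF k L continuous_on_const gF_cont[OF c] _ _ _ x])
        (use bx b0 K2 in \<open>auto intro!: gF_bnd\<close>)
    have g0: "Rep k L 0 0 (\<lambda>_. 0) x \<le> Rep k L 1 1 (\<lambda>_. 0) x"
      by (rule Rep_mono[OF k L continuous_on_const continuous_on_const _ _ _ x]) auto
    have g2: "Rep k L 1 1 (\<lambda>y. gF b K (u y) (v y)) x \<le> Rep k L 1 1 (\<lambda>_. K) x"
      by (rule Rep_mono[OF k L gF_cont[OF c] continuous_on_const _ _ _ x])
        (use bx b0 K2 in \<open>auto intro!: gF_bnd\<close>)
    show ?thesis using f1 f2 g0 g1 g2 Rone[OF x] Rep_zero[OF k L x] by linarith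
  qed
  have inv: "\<forall>x\<in>{0..L}. phi0 x \<le> ph n x \<and> ph n x \<le> ph (Suc n) x \<and> ph (Suc n) x \<le> 1
     \<and> 0 \<le> ps (Suc n) x \<and> ps (Suc n) x \<le> ps n x \<and> ps n x \<le> 1" for n
  proof (induction n)
    case 0
    show ?case
    proof
      fix x assume x: "x \<in> {0..L}"
      have bx0: "\<And>y. y \<in> {0..L} \<Longrightarrow> 0 \<le> phi0 y \<and> phi0 y \<le> 1 \<and> 0 \<le> (1::real) \<and> (1::real) \<le> 1"
        using phi0b e1 by fastforce
      have B: "0 \<le> ph 1 x \<and> ph 1 x \<le> 1 \<and> 0 \<le> ps 1 x \<and> ps 1 x \<le> 1"
        using box_bnd[OF phi0c continuous_on_const bx0 x] by (simp add: phS psS ph0 ps0)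
      have "phi0 x = Rep k L 0 0 (\<lambda>y. (k^2 + (pi/L)^2) * phi0 y) x"
        using Rep_sin[OF k L x, of e] by (simp add: phi0_def)
      also have "\<dots> \<le> Rep k L 0 0 (\<lambda>y. fF abar K (phi0 y) 1) x"
      proof (rule Rep_mono[OF k L _ _ _ _ _ x])
        show "continuous_on {0..L} (\<lambda>y. (k^2 + (pi/L)^2) * phi0 y)"
          by (intro continuous_intros phi0c)
        show "continuous_on {0..L} (\<lambda>y. fF abar K (phi0 y) 1)"
          by (intro fF_cont phi0c continuous_on_const)
        fix y assume y: "y \<in> {0..L}"
        have p: "0 \<le> phi0 y" "phi0 y \<le> e" using phi0b[OF y] by auto
        have "c \<le> 1 - phi0 y - abar" using p e0 by (simp add: e_def)
        then have "c * phi0 y \<le> (1 - phi0 y - abar) * phi0 y" using p by (intro mult_right_mono)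
        then show "(k^2 + (pi/L)^2) * phi0 y \<le> fF abar K (phi0 y) 1"
          by (simp add: fF_def K_def c_def algebra_simps)
      qed auto
      also have "\<dots> = ph 1 x" by (simp add: phS ph0 ps0)
      finally show "phi0 x \<le> ph 0 x \<and> ph 0 x \<le> ph (Suc 0) x \<and> ph (Suc 0) x \<le> 1
          \<and> 0 \<le> ps (Suc 0) x \<and> ps (Suc 0) x \<le> ps 0 x \<and> ps 0 x \<le> 1"
        using B by (simp add: ph0 ps0)
    qed
  next
    case (Suc n)
    show ?case
    proof
      fix x assume x: "x \<in> {0..L}"
      have bx: "\<And>y. y \<in> {0..L} \<Longrightarrow> 0 \<le> ph n y \<and> ph n y \<le> ph (Suc n) y \<and> ph (Suc n) y \<le> 1 \<and>
           0 \<le> ps (Suc n) y \<and> ps (Suc n) y \<le> ps n y \<and> ps n y \<le> 1"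
        using Suc phi0b by fastforce
      have bx2: "\<And>y. y \<in> {0..L} \<Longrightarrow> 0 \<le> ph (Suc n) y \<and> ph (Suc n) y \<le> 1 \<and> 0 \<le> ps (Suc n) y \<and> ps (Suc n) y \<le> 1"
        using bx by fastforce
      have S1: "ph (Suc n) x \<le> ph (Suc (Suc n)) x \<and> ps (Suc (Suc n)) x \<le> ps (Suc n) x"
        using box_step[OF cont[THEN conjunct1] cont[THEN conjunct2] cont[THEN conjunct1] cont[THEN conjunct2] bx x]
        by (simp add: phS psS)
      have S2: "ph (Suc (Suc n)) x \<le> 1 \<and> 0 \<le> ps (Suc (Suc n)) x"
        using box_bnd[OF cont[THEN conjunct1] cont[THEN conjunct2] bx2 x]
        by (simp add: phS psS)
      show "phi0 x \<le> ph (Suc n) x \<and> ph (Suc n) x \<le> ph (Suc (Suc n)) x \<and> ph (Suc (Suc n)) x \<le> 1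
          \<and> 0 \<le> ps (Suc (Suc n)) x \<and> ps (Suc (Suc n)) x \<le> ps (Suc n) x \<and> ps (Suc n) x \<le> 1"
      proof -
        have "phi0 x \<le> ph n x \<and> ph n x \<le> ph (Suc n) x \<and> ps (Suc n) x \<le> ps n x \<and> ps n x \<le> 1"
          using Suc x by blast
        then show ?thesis using S1 S2 by linarith
      qed
    qed
  qed
  have bxn: "0 \<le> ph n y \<and> ph n y \<le> 1 \<and> 0 \<le> ps n y \<and> ps n y \<le> 1" if y: "y \<in> {0..L}" for n y
  proof (cases n)
    case 0 then show ?thesis using phi0b[OF y] e1 by (simp add: ph0 ps0)
  next
    case (Suc m)
    have "phi0 y \<le> ph m y \<and> ph m y \<le> ph (Suc m) y \<and> ph (Suc m) y \<le> 1 \<and> 0 \<le> ps (Suc m) y \<and> ps (Suc m) y \<le> ps m y \<and> ps m y \<le> 1"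
      using inv y by blast
    then show ?thesis using phi0b[OF y] Suc by auto
  qed
  define phL where "phL = (\<lambda>x. lim (\<lambda>n. ph n x))"
  define psL where "psL = (\<lambda>x. lim (\<lambda>n. ps n x))"
  have phlim: "(\<lambda>n. ph n x) \<longlonglongrightarrow> phL x \<and> phi0 x \<le> phL x \<and> phL x \<le> 1" if x: "x \<in> {0..L}" for x
  proof -
    have "incseq (\<lambda>n. ph n x)" using inv x by (intro incseq_SucI) blast
    moreover have "\<forall>i. ph i x \<le> 1" using bxn x by blast
    ultimately obtain l where l: "(\<lambda>n. ph n x) \<longlonglongrightarrow> l" by (rule incseq_convergent)
    then have "phL x = l" unfolding phL_def by (rule limI)
    moreover have "phi0 x \<le> l" by (rule LIMSEQ_le_const[OF l]) (use inv x in blast)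
    moreover have "l \<le> 1" by (rule LIMSEQ_le_const2[OF l]) (use bxn x in blast)
    ultimately show ?thesis using l by simp
  qed
  have pslim: "(\<lambda>n. ps n x) \<longlonglongrightarrow> psL x \<and> 0 \<le> psL x \<and> psL x \<le> 1" if x: "x \<in> {0..L}" for x
  proof -
    have "decseq (\<lambda>n. ps n x)" using inv x by (intro decseq_SucI) blast
    moreover have "\<forall>i. 0 \<le> ps i x" using bxn x by blast
    ultimately obtain l where l: "(\<lambda>n. ps n x) \<longlonglongrightarrow> l" by (rule decseq_convergent)
    then have "psL x = l" unfolding psL_def by (rule limI)
    moreover have "0 \<le> l"
      by (rule LIMSEQ_le_const[OF l]) (use bxn x in blast)
    moreover have "l \<le> 1" by (rule LIMSEQ_le_const2[OF l]) (use bxn x in blast)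
    ultimately show ?thesis using l by simp
  qed
  define FL where "FL = (\<lambda>y. fF abar K (phL y) (psL y))"
  define GL where "GL = (\<lambda>y. gF b K (phL y) (psL y))"
  have LF: "(\<lambda>y. sinh (k*y) * FL y) integrable_on {0..L} \<and> (\<lambda>y. sinh (k*(L-y)) * FL y) integrable_on {0..L}
     \<and> (\<forall>x\<in>{0..L}. (\<lambda>n. Rep k L 0 0 (\<lambda>y. fF abar K (ph n y) (ps n y)) x) \<longlonglongrightarrow> Rep k L 0 0 FL x)"
  proof -
    have cF: "continuous_on {0..L} (\<lambda>y. fF abar K (ph n y) (ps n y))" for n
      using cont[of n] by (intro fF_cont) auto
    have bF: "\<bar>fF abar K (ph n y) (ps n y)\<bar> \<le> K" if "y \<in> {0..L}" for n y
      using fF_bnd[of "ph n y" "ps n y" abar K] bxn[OF that, of n] ab K2 by auto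
    have lF: "(\<lambda>n. fF abar K (ph n y) (ps n y)) \<longlonglongrightarrow> FL y" if "y \<in> {0..L}" for y
      unfolding FL_def using phlim[OF that] pslim[OF that] by (intro fF_tendsto) auto
    show ?thesis using Rep_lim[OF k L cF bF lF] by blast
  qed
  have LG: "(\<lambda>y. sinh (k*y) * GL y) integrable_on {0..L} \<and> (\<lambda>y. sinh (k*(L-y)) * GL y) integrable_on {0..L}
     \<and> (\<forall>x\<in>{0..L}. (\<lambda>n. Rep k L 1 1 (\<lambda>y. gF b K (ph n y) (ps n y)) x) \<longlonglongrightarrow> Rep k L 1 1 GL x)"
  proof -
    have cF: "continuous_on {0..L} (\<lambda>y. gF b K (ph n y) (ps n y))" for n
      using cont[of n] by (intro gF_cont) auto
    have bF: "\<bar>gF b K (ph n y) (ps n y)\<bar> \<le> K" if "y \<in> {0..L}" for n y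
      using gF_bnd[of "ph n y" "ps n y" b K] bxn[OF that, of n] b0 K2 by auto
    have lF: "(\<lambda>n. gF b K (ph n y) (ps n y)) \<longlonglongrightarrow> GL y" if "y \<in> {0..L}" for y
      unfolding GL_def using phlim[OF that] pslim[OF that] by (intro gF_tendsto) auto
    show ?thesis using Rep_lim[OF k L cF bF lF] by blast
  qed
  have phEq: "phL x = Rep k L 0 0 FL x" if x: "x \<in> {0..L}" for x
  proof -
    have "(\<lambda>n. ph (Suc n) x) \<longlonglongrightarrow> phL x" using phlim[OF x] LIMSEQ_Suc by blast
    moreover have "(\<lambda>n. ph (Suc n) x) \<longlonglongrightarrow> Rep k L 0 0 FL x" using LF x by (simp add: phS)
    ultimately show ?thesis by (rule LIMSEQ_unique)
  qed
  have psEq: "psL x = Rep k L 1 1 GL x" if x: "x \<in> {0..L}" for x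
  proof -
    have "(\<lambda>n. ps (Suc n) x) \<longlonglongrightarrow> psL x" using pslim[OF x] LIMSEQ_Suc by blast
    moreover have "(\<lambda>n. ps (Suc n) x) \<longlonglongrightarrow> Rep k L 1 1 GL x" using LG x by (simp add: psS)
    ultimately show ?thesis by (rule LIMSEQ_unique)
  qed
  have phLc: "continuous_on {0..L} phL"
    using continuous_on_eq[OF Rep_cont[OF k L, of FL 0 0]] LF phEq by auto
  have psLc: "continuous_on {0..L} psL"
    using continuous_on_eq[OF Rep_cont[OF k L, of GL 1 1]] LG psEq by auto
  have FLc: "continuous_on {0..L} FL" unfolding FL_def by (intro fF_cont phLc psLc)
  have GLc: "continuous_on {0..L} GL" unfolding GL_def by (intro gF_cont phLc psLc)
  define \<phi> where "\<phi> = Rep k L 0 0 FL"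
  define \<phi>' where "\<phi>' = Rep1 k L 0 0 FL"
  define \<phi>'' where "\<phi>'' = (\<lambda>x. k^2 * \<phi> x - FL x)"
  define \<psi> where "\<psi> = Rep k L 1 1 GL"
  define \<psi>' where "\<psi>' = Rep1 k L 1 1 GL"
  define \<psi>'' where "\<psi>'' = (\<lambda>x. k^2 * \<psi> x - GL x)"
  have phv: "\<phi> x = phL x" "\<psi> x = psL x" if "x \<in> {0..L}" for x
    using phEq[OF that] psEq[OF that] by (simp_all add: \<phi>_def \<psi>_def)
  have d1: "(\<phi> has_real_derivative \<phi>' x) (at x)" "(\<phi>' has_real_derivative \<phi>'' x) (at x)"
    "(\<psi> has_real_derivative \<psi>' x) (at x)" "(\<psi>' has_real_derivative \<psi>'' x) (at x)"
    if x: "x \<in> {0<..<L}" for x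
    unfolding \<phi>_def \<phi>'_def \<phi>''_def \<psi>_def \<psi>'_def \<psi>''_def
    using Rep_deriv[OF k L FLc x] Rep_deriv[OF k L GLc x] by auto
  have eq1: "- \<phi>'' x = \<phi> x * (1 - \<phi> x - abar * \<psi> x)" if x: "x \<in> {0..L}" for x
    using phv[OF x] by (simp add: \<phi>''_def FL_def fF_def K_def algebra_simps)
  have eq2: "- \<psi>'' x = \<psi> x * (1 - b * \<phi> x - \<psi> x)" if x: "x \<in> {0..L}" for x
    using phv[OF x] by (simp add: \<psi>''_def GL_def gF_def K_def algebra_simps)
  have pos1: "0 < \<phi> x" if x: "x \<in> {0<..<L}" for x
    using phv[of x] phlim[of x] phi0p[OF x] x by force
  have bxL: "0 \<le> phL y \<and> phL y \<le> 1 \<and> 0 \<le> psL y \<and> psL y \<le> 1" if y: "y \<in> {0..L}" for y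
    using phlim[OF y] pslim[OF y] phi0b[OF y] by linarith
  have pos2: "0 < \<psi> x" if x: "x \<in> {0<..<L}" for x
  proof -
    have xx: "x \<in> {0..L}" using x by auto
    have "0 \<le> Rep k L 1 1 (\<lambda>_. 0) x" using Rep_pos[OF k L x] by simp
    have "Rep k L 1 1 (\<lambda>_. 0) x \<le> Rep k L 1 1 GL x"
      by (rule Rep_mono[OF k L continuous_on_const GLc _ _ _ xx])
         (use bxL b0 K2 in \<open>auto simp: GL_def intro!: gF_bnd\<close>)
    then show ?thesis using Rep_pos[OF k L x] by (simp add: \<psi>_def)
  qed
  have lt1: "\<phi> x < 1" if x: "x \<in> {0<..<L}" for x
  proof (rule ccontr)
    assume "\<not> \<phi> x < 1"
    moreover have "\<phi> x \<le> 1" using phv[of x] phlim[of x] x by auto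
    ultimately have one: "\<phi> x = 1" by simp
    have "\<phi>'' x \<le> 0"
    proof (rule SD[of 0 x L \<phi> \<phi>'])
      show "0 < x" "x < L" using x by auto
      show "\<And>y. y \<in> {0<..<L} \<Longrightarrow> (\<phi> has_real_derivative \<phi>' y) (at y)" using d1 by blast
      show "(\<phi>' has_real_derivative \<phi>'' x) (at x)" using d1 x by blast
      show "\<And>y. y \<in> {0<..<L} \<Longrightarrow> \<phi> y \<le> \<phi> x" using one phv phlim by fastforce
    qed
    moreover have "- \<phi>'' x = - abar * \<psi> x" using eq1[of x] one x by auto
    moreover have "abar * \<psi> x > 0" using a0 pos2[OF x] by simp
    ultimately show False by linarith
  qed
  have lt2: "\<psi> x < 1" if x: "x \<in> {0<..<L}" for x
  proof (rule ccontr)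
    assume "\<not> \<psi> x < 1"
    moreover have "\<psi> x \<le> 1" using phv[of x] pslim[of x] x by auto
    ultimately have one: "\<psi> x = 1" by simp
    have "\<psi>'' x \<le> 0"
    proof (rule SD[of 0 x L \<psi> \<psi>'])
      show "0 < x" "x < L" using x by auto
      show "\<And>y. y \<in> {0<..<L} \<Longrightarrow> (\<psi> has_real_derivative \<psi>' y) (at y)" using d1 by blast
      show "(\<psi>' has_real_derivative \<psi>'' x) (at x)" using d1 x by blast
      show "\<And>y. y \<in> {0<..<L} \<Longrightarrow> \<psi> y \<le> \<psi> x" using one phv pslim by fastforce
    qed
    moreover have "- \<psi>'' x = - b * \<phi> x" using eq2[of x] one x by auto
    moreover have "b * \<phi> x > 0" using b1 pos1[OF x] by simp
    ultimately show False by linarith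
  qed
  have cphi: "continuous_on {0..L} \<phi>" unfolding \<phi>_def by (rule Rep_cont2[OF k L FLc])
  have cpsi: "continuous_on {0..L} \<psi>" unfolding \<psi>_def by (rule Rep_cont2[OF k L GLc])
  have bd: "\<phi> 0 = 0" "\<phi> L = 0" "\<psi> 0 = 1" "\<psi> L = 1"
    unfolding \<phi>_def \<psi>_def using Rep_0[OF k L] Rep_L[OF k L] by auto
  show ?thesis
    apply (rule exI[of _ \<phi>], rule exI[of _ \<phi>'], rule exI[of _ \<phi>''])
    apply (rule exI[of _ \<psi>], rule exI[of _ \<psi>'], rule exI[of _ \<psi>''])
    using cphi cpsi bd d1 eq1 eq2 pos1 pos2 lt1 lt2 by auto
qed


end
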